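(* There exist constants $c_1,c_2>0$ such that for all $n\ge1$, $c_1(3/4)^n\le 1-\mathcal{C}^*(n)\le c_2(3/4)^n$; that is, $1-\mathcal{C}^*(n)=\Theta\big((3/4)^n\big)$.
   Context: The concentratable entanglement of an $n$-qubit pure state is $\mathcal{C}(\ket{\psi})=1-\frac{1}{2^{n}}\sum_{\alpha\subseteq [n]}\mathrm{Tr}[\rho_\alpha^2]$ ($\rho_\alpha$ the reduced state on $\alpha$, $\mathrm{Tr}[\rho_\emptyset^2]=1$), and $\mathcal{C}^*(n)=\max_{\ket{\psi}}\mathcal{C}(\ket{\psi})$ over $n$-qubit pure states. *)

theory Defs
  imports Complex_Main
begin

text \<open>An n-qubit pure state is given by its amplitudes in the computational basis.
  A basis vector |x_0 ... x_{n-1}> is encoded by the set of positions i < n with x_i = 1,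
  i.e. by a subset of {..<n}. Only values on Pow {..<n} are relevant.\<close>

definition qstate :: "nat \<Rightarrow> (nat set \<Rightarrow> complex) \<Rightarrow> bool" where
  "qstate n \<psi> \<longleftrightarrow> (\<Sum>x\<in>Pow {..<n}. (cmod (\<psi> x))^2) = 1"

text \<open>Reduced density matrix on the qubits in alpha (subset of {..<n}):
  entry (a, a') for a, a' subsets of alpha, obtained by tracing out the complement.\<close>

definition rdm :: "nat \<Rightarrow> (nat set \<Rightarrow> complex) \<Rightarrow> nat set \<Rightarrow> nat set \<Rightarrow> nat set \<Rightarrow> complex" where
  "rdm n \<psi> \<alpha> a a' = (\<Sum>b\<in>Pow ({..<n} - \<alpha>). \<psi> (a \<union> b) * cnj (\<psi> (a' \<union> b)))"

text \<open>Purity Tr[rho_alpha^2] (real, since rho_alpha is Hermitian).\<close>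

definition purity :: "nat \<Rightarrow> (nat set \<Rightarrow> complex) \<Rightarrow> nat set \<Rightarrow> real" where
  "purity n \<psi> \<alpha> = Re (\<Sum>a\<in>Pow \<alpha>. \<Sum>a'\<in>Pow \<alpha>. rdm n \<psi> \<alpha> a a' * rdm n \<psi> \<alpha> a' a)"

definition conc_ent :: "nat \<Rightarrow> (nat set \<Rightarrow> complex) \<Rightarrow> real" where
  "conc_ent n \<psi> = 1 - (1 / 2 ^ n) * (\<Sum>\<alpha>\<in>Pow {..<n}. purity n \<psi> \<alpha>)"

definition conc_ent_max :: "nat \<Rightarrow> real" where
  "conc_ent_max n = (SUP \<psi>\<in>{\<psi>. qstate n \<psi>}. conc_ent n \<psi>)"

end

theory Submission
  imports Defs "HOL-Library.FuncSet"
begin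

lemma sum_pow_binom: "(\<Sum>\<alpha>\<in>Pow {..<n}. (x::real)^card \<alpha> * y^(n - card \<alpha>)) = (x+y)^n"
proof (induction n)
  case 0 then show ?case by simp
next
  case (Suc n)
  have P: "Pow {..<Suc n} = Pow {..<n} \<union> insert n ` Pow {..<n}"
    by (simp add: lessThan_Suc Pow_insert)
  have disj: "Pow {..<n} \<inter> insert n ` Pow {..<n} = {}" by auto
  have inj: "inj_on (insert n) (Pow {..<n})"
    by (rule inj_onI) (metis Pow_iff insert_ident lessThan_iff less_irrefl subsetD)
  have A: "(\<Sum>\<alpha>\<in>Pow {..<n}. x^card \<alpha> * y^(Suc n - card \<alpha>)) = y * (x+y)^n"
  proof -
    have "(\<Sum>\<alpha>\<in>Pow {..<n}. x^card \<alpha> * y^(Suc n - card \<alpha>)) = (\<Sum>\<alpha>\<in>Pow {..<n}. y * (x^card \<alpha> * y^(n - card \<alpha>)))"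
    proof (rule sum.cong[OF refl])
      fix \<alpha> assume "\<alpha> \<in> Pow {..<n}"
      then have "card \<alpha> \<le> n" by (metis PowD card_lessThan card_mono finite_lessThan)
      then have "Suc n - card \<alpha> = Suc (n - card \<alpha>)" by simp
      then show "x^card \<alpha> * y^(Suc n - card \<alpha>) = y * (x^card \<alpha> * y^(n - card \<alpha>))" by simp
    qed
    also have "\<dots> = y * (x+y)^n" by (simp add: sum_distrib_left[symmetric] Suc.IH)
    finally show ?thesis .
  qed
  have B: "(\<Sum>\<alpha>\<in>insert n ` Pow {..<n}. x^card \<alpha> * y^(Suc n - card \<alpha>)) = x * (x+y)^n"
  proof -
    have "(\<Sum>\<alpha>\<in>insert n ` Pow {..<n}. x^card \<alpha> * y^(Suc n - card \<alpha>))
        = (\<Sum>\<alpha>\<in>Pow {..<n}. x^card (insert n \<alpha>) * y^(Suc n - card (insert n \<alpha>)))"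
      by (simp add: sum.reindex[OF inj])
    also have "\<dots> = (\<Sum>\<alpha>\<in>Pow {..<n}. x * (x^card \<alpha> * y^(n - card \<alpha>)))"
    proof (rule sum.cong[OF refl])
      fix \<alpha> assume h: "\<alpha> \<in> Pow {..<n}"
      then have f: "finite \<alpha>" by (meson PowD finite_lessThan finite_subset)
      have "n \<notin> \<alpha>" using h by auto
      then have "card (insert n \<alpha>) = Suc (card \<alpha>)" using f by simp
      then show "x^card (insert n \<alpha>) * y^(Suc n - card (insert n \<alpha>)) = x * (x^card \<alpha> * y^(n - card \<alpha>))" by simp
    qed
    also have "\<dots> = x * (x+y)^n" by (simp add: sum_distrib_left[symmetric] Suc.IH)
    finally show ?thesis .
  qed
  have "(\<Sum>\<alpha>\<in>Pow {..<Suc n}. x^card \<alpha> * y^(Suc n - card \<alpha>))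
     = (\<Sum>\<alpha>\<in>Pow {..<n}. x^card \<alpha> * y^(Suc n - card \<alpha>)) + (\<Sum>\<alpha>\<in>insert n ` Pow {..<n}. x^card \<alpha> * y^(Suc n - card \<alpha>))"
    unfolding P by (rule sum.union_disjoint) (use disj in auto)
  also have "\<dots> = (y + x) * (x+y)^n" by (simp add: A B distrib_right)
  finally show ?case by (simp add: add.commute)
qed

lemma split_sum:
  assumes "\<alpha> \<subseteq> U"
  shows "(\<Sum>a\<in>Pow \<alpha>. \<Sum>b\<in>Pow (U - \<alpha>). g (a \<union> b)) = (\<Sum>x\<in>Pow U. g x)"
proof -
  have bij: "bij_betw (\<lambda>(a,b). a \<union> b) (Pow \<alpha> \<times> Pow (U - \<alpha>)) (Pow U)"
  proof (rule bij_betw_byWitness[where f' = "\<lambda>x. (x \<inter> \<alpha>, x - \<alpha>)"])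
    show "\<forall>a\<in>Pow \<alpha> \<times> Pow (U - \<alpha>). (\<lambda>x. (x \<inter> \<alpha>, x - \<alpha>)) ((\<lambda>(a, b). a \<union> b) a) = a" by auto
    show "\<forall>a'\<in>Pow U. (\<lambda>(a, b). a \<union> b) (a' \<inter> \<alpha>, a' - \<alpha>) = a'" by auto
    show "(\<lambda>(a, b). a \<union> b) ` (Pow \<alpha> \<times> Pow (U - \<alpha>)) \<subseteq> Pow U" using assms by auto
    show "(\<lambda>x. (x \<inter> \<alpha>, x - \<alpha>)) ` Pow U \<subseteq> Pow \<alpha> \<times> Pow (U - \<alpha>)" by auto
  qed
  have "(\<Sum>a\<in>Pow \<alpha>. \<Sum>b\<in>Pow (U - \<alpha>). g (a \<union> b)) = (\<Sum>p\<in>Pow \<alpha> \<times> Pow (U - \<alpha>). g ((\<lambda>(a,b). a \<union> b) p))"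
    by (simp add: sum.cartesian_product split_def)
  also have "\<dots> = (\<Sum>x\<in>Pow U. g x)" by (rule sum.reindex_bij_betw[OF bij])
  finally show ?thesis .
qed

lemma rdm_herm: "rdm n \<psi> \<alpha> a' a = cnj (rdm n \<psi> \<alpha> a a')"
  unfolding rdm_def by (simp add: mult.commute)

lemma purity_lower:
  assumes q: "qstate n \<psi>" and sub: "\<alpha> \<subseteq> {..<n}"
  shows "purity n \<psi> \<alpha> \<ge> 1 / 2 ^ card \<alpha>"
proof -
  define d where "d a = (\<Sum>b\<in>Pow ({..<n} - \<alpha>). (cmod (\<psi> (a \<union> b)))^2)" for a
  have fa: "finite \<alpha>" using sub finite_subset by blast
  have p: "purity n \<psi> \<alpha> = (\<Sum>a\<in>Pow \<alpha>. \<Sum>a'\<in>Pow \<alpha>. (cmod (rdm n \<psi> \<alpha> a a'))^2)"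
  proof -
    have "(\<Sum>a\<in>Pow \<alpha>. \<Sum>a'\<in>Pow \<alpha>. rdm n \<psi> \<alpha> a a' * rdm n \<psi> \<alpha> a' a)
       = (\<Sum>a\<in>Pow \<alpha>. \<Sum>a'\<in>Pow \<alpha>. complex_of_real ((cmod (rdm n \<psi> \<alpha> a a'))^2))"
    proof (intro sum.cong refl)
      fix a a'
      show "rdm n \<psi> \<alpha> a a' * rdm n \<psi> \<alpha> a' a = complex_of_real ((cmod (rdm n \<psi> \<alpha> a a'))^2)"
        using rdm_herm[of n \<psi> \<alpha> a a'] complex_norm_square[of "rdm n \<psi> \<alpha> a a'"] by simp
    qed
    then show ?thesis unfolding purity_def by simp
  qed
  have diag: "cmod (rdm n \<psi> \<alpha> a a) = d a" for a
  proof -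
    have "rdm n \<psi> \<alpha> a a = complex_of_real (d a)"
      unfolding rdm_def d_def by (simp add: complex_norm_square[symmetric])
    moreover have "d a \<ge> 0" unfolding d_def by (simp add: sum_nonneg)
    ultimately show ?thesis by simp
  qed
  have ge: "purity n \<psi> \<alpha> \<ge> (\<Sum>a\<in>Pow \<alpha>. (d a)^2)"
    unfolding p
  proof (rule sum_mono)
    fix a assume "a \<in> Pow \<alpha>"
    then have "(cmod (rdm n \<psi> \<alpha> a a))^2 \<le> (\<Sum>a'\<in>Pow \<alpha>. (cmod (rdm n \<psi> \<alpha> a a'))^2)"
      by (intro member_le_sum) (auto simp: fa)
    then show "(d a)^2 \<le> (\<Sum>a'\<in>Pow \<alpha>. (cmod (rdm n \<psi> \<alpha> a a'))^2)" by (simp add: diag)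
  qed
  have sd: "(\<Sum>a\<in>Pow \<alpha>. d a) = 1"
    unfolding d_def using split_sum[OF sub, of "\<lambda>x. (cmod (\<psi> x))^2"] q unfolding qstate_def by simp
  define N where "N = real (card (Pow \<alpha>))"
  have N: "N = 2 ^ card \<alpha>" unfolding N_def using fa by (simp add: card_Pow)
  define m where "m = 1 / N"
  have "0 \<le> (\<Sum>a\<in>Pow \<alpha>. (d a - m)^2)" by (simp add: sum_nonneg)
  also have "\<dots> = (\<Sum>a\<in>Pow \<alpha>. (d a)^2) - 2 * m * (\<Sum>a\<in>Pow \<alpha>. d a) + N * m^2"
    by (simp add: power2_diff sum.distrib sum_subtractf sum_distrib_left N_def algebra_simps)
  also have "\<dots> = (\<Sum>a\<in>Pow \<alpha>. (d a)^2) - 1 / N"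
    using N by (simp add: sd m_def power2_eq_square)
  finally show ?thesis using ge N by simp
qed


lemma flip_zero:
  fixes S :: "(nat set \<Rightarrow> real) set"
  assumes S: "S = PiE P (\<lambda>_. {-1,1})" and p: "p \<in> P" and d: "q \<noteq> p" "r \<noteq> p" "t \<noteq> p"
  shows "(\<Sum>s\<in>S. s p * s q * s r * s t) = 0"
proof -
  define g where "g s = s(p := - s p)" for s :: "nat set \<Rightarrow> real"
  have gS: "g s \<in> S" if "s \<in> S" for s using that p unfolding S g_def by (auto simp: PiE_iff extensional_def)
  have gg: "g (g s) = s" for s unfolding g_def by auto
  have bij: "bij_betw g S S" by (rule bij_betw_byWitness[where f'=g]) (use gS gg in auto)
  define F where "F s = s p * s q * s r * s t" for s :: "nat set \<Rightarrow> real"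
  have Fg: "F (g s) = - F s" for s unfolding F_def g_def using d by simp
  have "(\<Sum>s\<in>S. F (g s)) = (\<Sum>s\<in>S. F s)" by (rule sum.reindex_bij_betw[OF bij])
  then have "- (\<Sum>s\<in>S. F s) = (\<Sum>s\<in>S. F s)" by (simp add: Fg sum_negf)
  then show ?thesis unfolding F_def by simp
qed

lemma sign_val: "s \<in> PiE P (\<lambda>_. {-1::real,1}) \<Longrightarrow> x \<in> P \<Longrightarrow> \<bar>s x\<bar> = 1"
  by (auto simp: PiE_iff)

lemma sign_bound:
  fixes S :: "(nat set \<Rightarrow> real) set"
  assumes S: "S = PiE (Pow U) (\<lambda>_. {-1,1})" and sub: "\<alpha> \<subseteq> U"
    and a: "a \<in> Pow \<alpha>" "a' \<in> Pow \<alpha>" and b: "b \<in> Pow (U - \<alpha>)" "b' \<in> Pow (U - \<alpha>)"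
  shows "(\<Sum>s\<in>S. s (a\<union>b) * s (a'\<union>b) * s (a\<union>b') * s (a'\<union>b'))
     \<le> real (card S) * ((if a = a' then 1 else 0) + (if b = b' then 1 else 0))"
proof (cases "a = a' \<or> b = b'")
  case True
  have "(\<Sum>s\<in>S. s (a\<union>b) * s (a'\<union>b) * s (a\<union>b') * s (a'\<union>b')) \<le> real (card S) * 1"
  proof (rule sum_bounded_above)
    fix s assume s: "s \<in> S"
    have m: "a\<union>b \<in> Pow U" "a'\<union>b \<in> Pow U" "a\<union>b' \<in> Pow U" "a'\<union>b' \<in> Pow U" using a b sub by auto
    have s': "s \<in> PiE (Pow U) (\<lambda>_. {-1::real,1})" using s S by simp
    have "s (a\<union>b) * s (a'\<union>b) * s (a\<union>b') * s (a'\<union>b') \<le> \<bar>s (a\<union>b) * s (a'\<union>b) * s (a\<union>b') * s (a'\<union>b')\<bar>"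
      by simp
    also have "\<dots> = 1" by (simp add: abs_mult sign_val[OF s' m(1)] sign_val[OF s' m(2)] sign_val[OF s' m(3)] sign_val[OF s' m(4)])
    finally show "s (a\<union>b) * s (a'\<union>b) * s (a\<union>b') * s (a'\<union>b') \<le> 1" .
  qed
  also have "\<dots> \<le> real (card S) * ((if a = a' then 1 else 0) + (if b = b' then 1 else 0))"
    using True by (auto intro: mult_left_mono)
  finally show ?thesis .
next
  case False
  have "(\<Sum>s\<in>S. s (a\<union>b) * s (a'\<union>b) * s (a\<union>b') * s (a'\<union>b')) = 0"
    by (rule flip_zero[OF S]) (use False a b sub in blast)+
  then show ?thesis by simp
qed

lemma swap_le:
  fixes g :: "'a \<Rightarrow> 'b \<Rightarrow> real"
  shows "(\<And>x. x \<in> A \<Longrightarrow> (\<Sum>s\<in>S. g s x) \<le> h x) \<Longrightarrow> (\<Sum>s\<in>S. \<Sum>x\<in>A. g s x) \<le> (\<Sum>x\<in>A. h x)"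
  by (subst sum.swap) (rule sum_mono)

lemma purity_real:
  "purity n (\<lambda>x. complex_of_real (f x)) \<alpha> =
    (\<Sum>a\<in>Pow \<alpha>. \<Sum>a'\<in>Pow \<alpha>. \<Sum>b\<in>Pow ({..<n} - \<alpha>). \<Sum>b'\<in>Pow ({..<n} - \<alpha>).
        f (a\<union>b) * f (a'\<union>b) * f (a\<union>b') * f (a'\<union>b'))"
proof -
  define R where "R a a' = (\<Sum>b\<in>Pow ({..<n} - \<alpha>). f (a\<union>b) * f (a'\<union>b))" for a a'
  have r: "rdm n (\<lambda>x. complex_of_real (f x)) \<alpha> a a' = complex_of_real (R a a')" for a a'
    unfolding rdm_def R_def by simp
  have rs: "R a' a = R a a'" for a a' unfolding R_def by (simp add: mult.commute)
  have "purity n (\<lambda>x. complex_of_real (f x)) \<alpha> = (\<Sum>a\<in>Pow \<alpha>. \<Sum>a'\<in>Pow \<alpha>. R a a' * R a a')"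
    unfolding purity_def r by (simp add: rs)
  also have "\<dots> = (\<Sum>a\<in>Pow \<alpha>. \<Sum>a'\<in>Pow \<alpha>. \<Sum>b\<in>Pow ({..<n} - \<alpha>). \<Sum>b'\<in>Pow ({..<n} - \<alpha>).
        f (a\<union>b) * f (a'\<union>b) * f (a\<union>b') * f (a'\<union>b'))"
    unfolding R_def sum_product by (simp add: mult_ac)
  finally show ?thesis .
qed


lemma ifm1: "(if P then 1 else 0) * (k::real) = (if P then k else 0)" by simp
lemma ifm2: "(c::real) * (if P then k else 0) = (if P then c*k else 0)" by simp

lemma ifm3: "(if P then k else 0) * (m::real) = (if P then k*m else 0)" by simp

lemma good_state: "\<exists>\<psi>. qstate n \<psi> \<and> (\<Sum>\<alpha>\<in>Pow {..<n}. purity n \<psi> \<alpha>) \<le> 2 * (3/2)^n"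
proof -
  define U where "U = {..<n::nat}"
  define S where "S = PiE (Pow U) (\<lambda>_. {-1::real,1})"
  define r where "r = 1 / sqrt (2^n :: real)"
  have r2: "r^2 = 1 / 2^n" unfolding r_def by (simp add: power_divide)
  have r4: "r*r*r*r = 1 / 4^n"
  proof -
    have "r*r*r*r = (r^2)^2" by (simp add: power2_eq_square)
    also have "\<dots> = 1 / 4^n" unfolding r2 by (simp add: power_divide power_mult_distrib[symmetric] power2_eq_square power_mult[symmetric])
    finally show ?thesis .
  qed
  have finS: "finite S" unfolding S_def U_def by (intro finite_PiE) auto
  have neS: "S \<noteq> {}" unfolding S_def by (simp add: PiE_eq_empty_iff)
  define Q where "Q \<alpha> s = (\<Sum>a\<in>Pow \<alpha>. \<Sum>a'\<in>Pow \<alpha>. \<Sum>b\<in>Pow (U - \<alpha>). \<Sum>b'\<in>Pow (U - \<alpha>).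
        s (a\<union>b) * s (a'\<union>b) * s (a\<union>b') * s (a'\<union>b'))" for \<alpha> and s :: "nat set \<Rightarrow> real"
  define \<psi> where "\<psi> s = (\<lambda>x. complex_of_real (r * s x))" for s :: "nat set \<Rightarrow> real"
  have pur: "purity n (\<psi> s) \<alpha> = r*r*r*r * Q \<alpha> s" for s \<alpha>
    unfolding \<psi>_def purity_real Q_def U_def by (simp add: sum_distrib_left mult_ac)
  have qs: "qstate n (\<psi> s)" if s: "s \<in> S" for s
  proof -
    have "(\<Sum>x\<in>Pow U. (cmod (\<psi> s x))^2) = (\<Sum>x\<in>Pow U. r^2)"
    proof (rule sum.cong[OF refl])
      fix x assume "x \<in> Pow U"
      then have "\<bar>s x\<bar> = 1" using s unfolding S_def by (rule sign_val[rotated])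
      then show "(cmod (\<psi> s x))^2 = r^2" unfolding \<psi>_def norm_of_real abs_mult by (simp add: power_mult_distrib)
    qed
    also have "\<dots> = 1" unfolding U_def r2 by (simp add: card_Pow)
    finally show ?thesis unfolding qstate_def U_def .
  qed
  have Qb: "(\<Sum>s\<in>S. Q \<alpha> s) \<le> real (card S) * (2^card \<alpha> * 4^(n - card \<alpha>) + 4^card \<alpha> * 2^(n - card \<alpha>))"
    if \<alpha>: "\<alpha> \<in> Pow U" for \<alpha>
  proof -
    have sub: "\<alpha> \<subseteq> U" using \<alpha> by simp
    have fa: "finite \<alpha>" using sub U_def finite_subset by blast
    have cB: "card (U - \<alpha>) = n - card \<alpha>" using sub fa unfolding U_def by (simp add: card_Diff_subset)
    have fB: "finite (U - \<alpha>)" unfolding U_def by simp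
    define c where "c = real (card S)"
    have "(\<Sum>s\<in>S. Q \<alpha> s) \<le> (\<Sum>a\<in>Pow \<alpha>. \<Sum>a'\<in>Pow \<alpha>. \<Sum>b\<in>Pow (U - \<alpha>). \<Sum>b'\<in>Pow (U - \<alpha>).
        c * ((if a = a' then 1 else 0) + (if b = b' then 1 else 0)))"
      unfolding Q_def c_def
      by (intro swap_le sign_bound[OF S_def sub]) auto
    also have "\<dots> = c * (2^card \<alpha> * 4^(n - card \<alpha>) + 4^card \<alpha> * 2^(n - card \<alpha>))"
    proof -
      have e1: "(\<Sum>a\<in>Pow \<alpha>. \<Sum>a'\<in>Pow \<alpha>. \<Sum>b\<in>Pow (U - \<alpha>). \<Sum>b'\<in>Pow (U - \<alpha>).
         c * (if a = a' then 1 else 0)) = c * 2^card \<alpha> * 4^(n - card \<alpha>)"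
        using fa fB cB by (simp add: card_Pow ifm1 ifm2 ifm3 sum.delta power_mult_distrib[symmetric] mult_ac)
      have e2: "(\<Sum>a\<in>Pow \<alpha>. \<Sum>a'\<in>Pow \<alpha>. \<Sum>b\<in>Pow (U - \<alpha>). \<Sum>b'\<in>Pow (U - \<alpha>).
         c * (if b = b' then 1 else 0)) = c * 4^card \<alpha> * 2^(n - card \<alpha>)"
        using fa fB cB by (simp add: card_Pow ifm1 ifm2 ifm3 sum.delta power_mult_distrib[symmetric] mult_ac)
      show ?thesis using e1 e2 by (simp add: distrib_left sum.distrib algebra_simps)
    qed
    finally show ?thesis unfolding c_def .
  qed
  have "(\<Sum>s\<in>S. \<Sum>\<alpha>\<in>Pow U. purity n (\<psi> s) \<alpha>) = r*r*r*r * (\<Sum>\<alpha>\<in>Pow U. \<Sum>s\<in>S. Q \<alpha> s)"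
    by (simp add: pur sum_distrib_left[symmetric] sum.swap[of _ S])
  also have "\<dots> \<le> r*r*r*r * (\<Sum>\<alpha>\<in>Pow U. real (card S) * (2^card \<alpha> * 4^(n - card \<alpha>) + 4^card \<alpha> * 2^(n - card \<alpha>)))"
    by (rule mult_left_mono[OF sum_mono[OF Qb]]) (auto simp: r4)
  also have "\<dots> = r*r*r*r * real (card S) * (6^n + 6^n)"
    using sum_pow_binom[where n=n and x=2 and y=4] sum_pow_binom[where n=n and x=4 and y=2]
    by (simp add: U_def sum.distrib sum_distrib_left[symmetric] mult_ac)
  also have "\<dots> = real (card S) * (2 * (3/2)^n)"
  proof -
    have h: "(6::real)^n / 4^n = (3/2)^n" by (simp add: power_divide[symmetric])
    show ?thesis unfolding r4 using h by (simp add: field_simps)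
  qed
  finally have tot: "(\<Sum>s\<in>S. \<Sum>\<alpha>\<in>Pow U. purity n (\<psi> s) \<alpha>) \<le> real (card S) * (2 * (3/2)^n)" .
  have "\<exists>s\<in>S. (\<Sum>\<alpha>\<in>Pow U. purity n (\<psi> s) \<alpha>) \<le> 2 * (3/2)^n"
  proof (rule ccontr)
    assume "\<not> ?thesis"
    then have "\<And>s. s \<in> S \<Longrightarrow> 2 * (3/2)^n < (\<Sum>\<alpha>\<in>Pow U. purity n (\<psi> s) \<alpha>)" by force
    then have "(\<Sum>s\<in>S. 2 * (3/2::real)^n) < (\<Sum>s\<in>S. \<Sum>\<alpha>\<in>Pow U. purity n (\<psi> s) \<alpha>)"
      by (intro sum_strict_mono finS neS) auto
    with tot show False by simp
  qed
  then obtain s where "s \<in> S" "(\<Sum>\<alpha>\<in>Pow U. purity n (\<psi> s) \<alpha>) \<le> 2 * (3/2)^n" by blast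
  then show ?thesis using qs unfolding U_def by blast
qed

lemma lower_all:
  assumes "qstate n \<psi>" shows "conc_ent n \<psi> \<le> 1 - (3/4)^n"
proof -
  have "(\<Sum>\<alpha>\<in>Pow {..<n}. (1/2::real)^card \<alpha> * 1^(n - card \<alpha>)) \<le> (\<Sum>\<alpha>\<in>Pow {..<n}. purity n \<psi> \<alpha>)"
    by (rule sum_mono) (use purity_lower[OF assms] in \<open>auto simp: power_one_over\<close>)
  then have "(3/2::real)^n \<le> (\<Sum>\<alpha>\<in>Pow {..<n}. purity n \<psi> \<alpha>)"
    using sum_pow_binom[where n=n and x="1/2" and y=1] by simp
  then have "(1/2^n) * (3/2::real)^n \<le> (1/2^n) * (\<Sum>\<alpha>\<in>Pow {..<n}. purity n \<psi> \<alpha>)"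
    by (rule mult_left_mono) simp
  moreover have "(1/2^n) * (3/2::real)^n = (3/4)^n"
    by (simp add: power_divide[symmetric] power_one_over[symmetric] power_mult_distrib[symmetric])
  ultimately show ?thesis unfolding conc_ent_def by simp
qed

theorem mainTheorem12:
  shows "\<exists>c1 c2 :: real. c1 > 0 \<and> c2 > 0 \<and>
    (\<forall>n::nat. n \<ge> 1 \<longrightarrow>
       c1 * (3/4) ^ n \<le> 1 - conc_ent_max n \<and> 1 - conc_ent_max n \<le> c2 * (3/4) ^ n)"
proof (intro exI conjI allI impI)
  show "(1::real) > 0" "(2::real) > 0" by auto
  fix n :: nat
  obtain \<psi> where q: "qstate n \<psi>" and p: "(\<Sum>\<alpha>\<in>Pow {..<n}. purity n \<psi> \<alpha>) \<le> 2 * (3/2)^n"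
    using good_state by blast
  have ne: "{\<psi>. qstate n \<psi>} \<noteq> {}" using q by blast
  have bdd: "bdd_above (conc_ent n ` {\<psi>. qstate n \<psi>})"
    by (rule bdd_aboveI2[where M = "1 - (3/4)^n"]) (use lower_all in auto)
  have "conc_ent_max n \<le> 1 - (3/4)^n"
    unfolding conc_ent_max_def by (rule cSUP_least[OF ne]) (use lower_all in auto)
  then show "1 * (3/4) ^ n \<le> 1 - conc_ent_max n" by simp
  have "conc_ent n \<psi> \<le> conc_ent_max n"
    unfolding conc_ent_max_def by (rule cSUP_upper[OF _ bdd]) (use q in auto)
  moreover have "(1/2^n) * (\<Sum>\<alpha>\<in>Pow {..<n}. purity n \<psi> \<alpha>) \<le> (1/2^n) * (2 * (3/2::real)^n)"
    by (rule mult_left_mono[OF p]) simp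
  moreover have "(1/2^n) * (2 * (3/2::real)^n) = 2 * (3/4)^n"
    by (simp add: power_divide[symmetric] power_one_over[symmetric] power_mult_distrib[symmetric])
  ultimately show "1 - conc_ent_max n \<le> 2 * (3/4) ^ n" unfolding conc_ent_def by simp
qed

end
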